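(* The category $\mathbf{StoneLPries}$ of Stone L-spaces and all L-morphisms between them is a full subcategory of the category $\mathbf{CohLPries}$ of coherent L-spaces and coherent L-morphisms; that is, every Stone L-space is a coherent L-space and every L-morphism between Stone L-spaces is coherent.
   Context: A Priestley space is a Stone space $X$ with a partial order such that clopen upsets separate points. An L-space is a Priestley space in which the downset of each clopen set is clopen and the closure of each open upset is open. ${\sf ClopUp}(X)$ is the set of clopen upsets; $\mathrm{cl}$ denotes closure. An L-morphism is a continuous order-preserving map $f:X\to X'$ between L-spaces with $f^{-1}(\mathrm{cl}\,U)=\mathrm{cl}\,f^{-1}(U)$ for every open upset $U$ of $X'$. The spatial part of $X$ is $Y=\{y\in X\mid{\downarrow}y\text{ clopen}\}$. A Scott upset is a closed upset $F$ with $\min F\subseteq Y$; ${\sf ClopSUp}(X)$ is the set of clopen Scott upsets. A biset is a set that is both an upset and a downset; ${\sf ClopBi}(X)$ is the set of clopen bisets. For $U,V\in{\sf ClopUp}(X)$, $V\ll U$ means that for every open upset $W$, $U\subseteq\mathrm{cl}\,W$ implies $V\subseteq W$; $\ker U=\bigcup\{V\in{\sf ClopUp}(X)\mid V\ll U\}$; $\mathrm{core}\,U=\bigcup\{V\in{\sf ClopSUp}(X)\mid V\subseteq U\}$; $\mathrm{cen}\,U=\bigcup\{V\in{\sf ClopBi}(X)\mid V\subseteq U\}$. $X$ is L-compact if $X=\ker X$. A Stone L-space is an L-compact L-space with $\mathrm{cen}\,U$ dense in $U$ for each $U\in{\sf ClopUp}(X)$. A coherent L-space is an L-compact L-space with $\mathrm{core}\,U$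 dense in $U$ for each $U\in{\sf ClopUp}(X)$ and $\ker(U\cap V)=\ker U\cap\ker V$ for all $U,V\in{\sf ClopUp}(X)$. An L-morphism $f:X_1\to X_2$ is coherent if $f^{-1}(\mathrm{core}\,U)\subseteq\mathrm{core}\,f^{-1}(U)$ for all $U\in{\sf ClopUp}(X_2)$. *)

theory Defs
  imports "HOL-Analysis.Analysis"
begin

text \<open>An ordered topological space is given by a topology T (carrier = topspace T)
together with a relation le, intended as a partial order on the carrier.\<close>

definition clopen_in :: "'a topology \<Rightarrow> 'a set \<Rightarrow> bool" where
  "clopen_in T U \<longleftrightarrow> openin T U \<and> closedin T U"

definition upset :: "'a topology \<Rightarrow> ('a \<Rightarrow> 'a \<Rightarrow> bool) \<Rightarrow> 'a set \<Rightarrow> bool" where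
  "upset T le U \<longleftrightarrow> U \<subseteq> topspace T \<and> (\<forall>x\<in>U. \<forall>y\<in>topspace T. le x y \<longrightarrow> y \<in> U)"

definition downset :: "'a topology \<Rightarrow> ('a \<Rightarrow> 'a \<Rightarrow> bool) \<Rightarrow> 'a set \<Rightarrow> bool" where
  "downset T le U \<longleftrightarrow> U \<subseteq> topspace T \<and> (\<forall>x\<in>U. \<forall>y\<in>topspace T. le y x \<longrightarrow> y \<in> U)"

definition down_of :: "'a topology \<Rightarrow> ('a \<Rightarrow> 'a \<Rightarrow> bool) \<Rightarrow> 'a set \<Rightarrow> 'a set" where
  "down_of T le U = {y \<in> topspace T. \<exists>x\<in>U. le y x}"

definition partial_order_on_space :: "'a topology \<Rightarrow> ('a \<Rightarrow> 'a \<Rightarrow> bool) \<Rightarrow> bool" where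
  "partial_order_on_space T le \<longleftrightarrow>
     (\<forall>x\<in>topspace T. le x x) \<and>
     (\<forall>x\<in>topspace T. \<forall>y\<in>topspace T. le x y \<and> le y x \<longrightarrow> x = y) \<and>
     (\<forall>x\<in>topspace T. \<forall>y\<in>topspace T. \<forall>z\<in>topspace T. le x y \<and> le y z \<longrightarrow> le x z)"

definition stone_space :: "'a topology \<Rightarrow> bool" where
  "stone_space T \<longleftrightarrow> compact_space T \<and> Hausdorff_space T \<and>
     (\<forall>U x. openin T U \<and> x \<in> U \<longrightarrow> (\<exists>V. clopen_in T V \<and> x \<in> V \<and> V \<subseteq> U))"

definition priestley_space :: "'a topology \<Rightarrow> ('a \<Rightarrow> 'a \<Rightarrow> bool) \<Rightarrow> bool" where
  "priestley_space T le \<longleftrightarrow> stone_space T \<and> partial_order_on_space T le \<and>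
     (\<forall>x\<in>topspace T. \<forall>y\<in>topspace T. \<not> le x y \<longrightarrow>
        (\<exists>U. clopen_in T U \<and> upset T le U \<and> x \<in> U \<and> y \<notin> U))"

definition ClopUp :: "'a topology \<Rightarrow> ('a \<Rightarrow> 'a \<Rightarrow> bool) \<Rightarrow> 'a set set" where
  "ClopUp T le = {U. clopen_in T U \<and> upset T le U}"

definition L_space :: "'a topology \<Rightarrow> ('a \<Rightarrow> 'a \<Rightarrow> bool) \<Rightarrow> bool" where
  "L_space T le \<longleftrightarrow> priestley_space T le \<and>
     (\<forall>U. clopen_in T U \<longrightarrow> clopen_in T (down_of T le U)) \<and>
     (\<forall>U. openin T U \<and> upset T le U \<longrightarrow> openin T (T closure_of U))"

definition L_morphism ::
  "'a topology \<Rightarrow> ('a \<Rightarrow> 'a \<Rightarrow> bool) \<Rightarrow> 'b topology \<Rightarrow> ('b \<Rightarrow> 'b \<Rightarrow> bool) \<Rightarrow> ('a \<Rightarrow> 'b) \<Rightarrow> bool" where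
  "L_morphism T1 le1 T2 le2 f \<longleftrightarrow>
     L_space T1 le1 \<and> L_space T2 le2 \<and>
     continuous_map T1 T2 f \<and>
     (\<forall>x\<in>topspace T1. \<forall>y\<in>topspace T1. le1 x y \<longrightarrow> le2 (f x) (f y)) \<and>
     (\<forall>U. openin T2 U \<and> upset T2 le2 U \<longrightarrow>
        {x \<in> topspace T1. f x \<in> T2 closure_of U} = T1 closure_of {x \<in> topspace T1. f x \<in> U})"

definition spatial_part :: "'a topology \<Rightarrow> ('a \<Rightarrow> 'a \<Rightarrow> bool) \<Rightarrow> 'a set" where
  "spatial_part T le = {y \<in> topspace T. clopen_in T (down_of T le {y})}"

definition minimals :: "('a \<Rightarrow> 'a \<Rightarrow> bool) \<Rightarrow> 'a set \<Rightarrow> 'a set" where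
  "minimals le F = {x \<in> F. \<forall>y\<in>F. le y x \<longrightarrow> y = x}"

definition scott_upset :: "'a topology \<Rightarrow> ('a \<Rightarrow> 'a \<Rightarrow> bool) \<Rightarrow> 'a set \<Rightarrow> bool" where
  "scott_upset T le F \<longleftrightarrow> closedin T F \<and> upset T le F \<and> minimals le F \<subseteq> spatial_part T le"

definition ClopSUp :: "'a topology \<Rightarrow> ('a \<Rightarrow> 'a \<Rightarrow> bool) \<Rightarrow> 'a set set" where
  "ClopSUp T le = {U. clopen_in T U \<and> scott_upset T le U}"

definition ClopBi :: "'a topology \<Rightarrow> ('a \<Rightarrow> 'a \<Rightarrow> bool) \<Rightarrow> 'a set set" where
  "ClopBi T le = {U. clopen_in T U \<and> upset T le U \<and> downset T le U}"

definition way_below :: "'a topology \<Rightarrow> ('a \<Rightarrow> 'a \<Rightarrow> bool) \<Rightarrow> 'a set \<Rightarrow> 'a set \<Rightarrow> bool" where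
  "way_below T le V U \<longleftrightarrow>
     (\<forall>W. openin T W \<and> upset T le W \<longrightarrow> U \<subseteq> T closure_of W \<longrightarrow> V \<subseteq> W)"

definition ker :: "'a topology \<Rightarrow> ('a \<Rightarrow> 'a \<Rightarrow> bool) \<Rightarrow> 'a set \<Rightarrow> 'a set" where
  "ker T le U = \<Union>{V \<in> ClopUp T le. way_below T le V U}"

definition core :: "'a topology \<Rightarrow> ('a \<Rightarrow> 'a \<Rightarrow> bool) \<Rightarrow> 'a set \<Rightarrow> 'a set" where
  "core T le U = \<Union>{V \<in> ClopSUp T le. V \<subseteq> U}"

definition cen :: "'a topology \<Rightarrow> ('a \<Rightarrow> 'a \<Rightarrow> bool) \<Rightarrow> 'a set \<Rightarrow> 'a set" where
  "cen T le U = \<Union>{V \<in> ClopBi T le. V \<subseteq> U}"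

definition L_compact :: "'a topology \<Rightarrow> ('a \<Rightarrow> 'a \<Rightarrow> bool) \<Rightarrow> bool" where
  "L_compact T le \<longleftrightarrow> topspace T = ker T le (topspace T)"

text \<open>A subset D of U is dense in U iff U is contained in the closure of D.\<close>
definition stone_L_space :: "'a topology \<Rightarrow> ('a \<Rightarrow> 'a \<Rightarrow> bool) \<Rightarrow> bool" where
  "stone_L_space T le \<longleftrightarrow> L_space T le \<and> L_compact T le \<and>
     (\<forall>U \<in> ClopUp T le. U \<subseteq> T closure_of (cen T le U))"

definition coherent_L_space :: "'a topology \<Rightarrow> ('a \<Rightarrow> 'a \<Rightarrow> bool) \<Rightarrow> bool" where
  "coherent_L_space T le \<longleftrightarrow> L_space T le \<and> L_compact T le \<and>
     (\<forall>U \<in> ClopUp T le. U \<subseteq> T closure_of (core T le U)) \<and>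
     (\<forall>U \<in> ClopUp T le. \<forall>V \<in> ClopUp T le. ker T le (U \<inter> V) = ker T le U \<inter> ker T le V)"

definition coherent_L_morphism ::
  "'a topology \<Rightarrow> ('a \<Rightarrow> 'a \<Rightarrow> bool) \<Rightarrow> 'b topology \<Rightarrow> ('b \<Rightarrow> 'b \<Rightarrow> bool) \<Rightarrow> ('a \<Rightarrow> 'b) \<Rightarrow> bool" where
  "coherent_L_morphism T1 le1 T2 le2 f \<longleftrightarrow> L_morphism T1 le1 T2 le2 f \<and>
     (\<forall>U \<in> ClopUp T2 le2.
        {x \<in> topspace T1. f x \<in> core T2 le2 U} \<subseteq> core T1 le1 {x \<in> topspace T1. f x \<in> U})"

end

theory Submission
  imports Defs
begin

lemma chain_min:
  assumes "finite F" "F \<noteq> {}" "\<forall>a\<in>F. \<forall>b\<in>F. le a b \<or> le b a"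
    and "\<forall>a\<in>F. \<forall>b\<in>F. \<forall>c\<in>F. le a b \<and> le b c \<longrightarrow> le a c"
  shows "\<exists>m\<in>F. \<forall>a\<in>F. le m a"
  using assms
proof (induction F rule: finite_ne_induct)
  case (singleton x)
  then show ?case by blast
next
  case (insert x F)
  have p1: "\<forall>a\<in>F. \<forall>b\<in>F. le a b \<or> le b a" using insert.prems(1) by blast
  have p2: "\<forall>a\<in>F. \<forall>b\<in>F. \<forall>c\<in>F. le a b \<and> le b c \<longrightarrow> le a c" using insert.prems(2) by blast
  obtain m where m: "m \<in> F" "\<forall>a\<in>F. le m a" using insert.IH[OF p1 p2] by blast
  have tot: "le x m \<or> le m x" using insert.prems(1) m(1) by blast
  show ?case
  proof (cases "le x m")
    case True
    have "\<forall>a\<in>F. le x a"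
    proof
      fix a assume a: "a \<in> F"
      have "le x m \<and> le m a" using True m(2) a by blast
      moreover have "x \<in> insert x F" "m \<in> insert x F" "a \<in> insert x F" using m(1) a by auto
      ultimately show "le x a" using insert.prems(2) by blast
    qed
    moreover have "le x x" using insert.prems(1) by blast
    ultimately show ?thesis by blast
  next
    case False
    then have "le m x" using tot by blast
    then have "\<forall>a\<in>insert x F. le m a" using m(2) by blast
    then show ?thesis using m(1) by blast
  qed
qed

lemma down_closed:
  assumes "priestley_space T le" "z \<in> topspace T"
  shows "closedin T (down_of T le {z})"
proof -
  have "openin T (topspace T - down_of T le {z})"
  proof (subst openin_subopen, intro ballI)
    fix w assume w: "w \<in> topspace T - down_of T le {z}"
    then have "\<not> le w z" by (auto simp: down_of_def)
    then obtain U where U: "clopen_in T U" "upset T le U" "w \<in> U" "z \<notin> U"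
      using assms w unfolding priestley_space_def by blast
    have "U \<subseteq> topspace T - down_of T le {z}"
      using U assms(2) unfolding upset_def down_of_def by auto
    then show "\<exists>V. openin T V \<and> w \<in> V \<and> V \<subseteq> topspace T - down_of T le {z}"
      using U unfolding clopen_in_def by blast
  qed
  then show ?thesis unfolding closedin_def down_of_def by auto
qed

lemma min_exists:
  assumes P: "priestley_space T le" and S: "closedin T S" and x: "x \<in> S"
  shows "\<exists>m \<in> minimals le S. le m x"
proof -
  have st: "stone_space T" and po: "partial_order_on_space T le"
    using P unfolding priestley_space_def by auto
  have comp: "compact_space T" using st unfolding stone_space_def by auto
  have Ssub: "S \<subseteq> topspace T" using S closedin_subset by blast
  define K where "K = {z \<in> S. le z x}"
  have rfl: "\<And>a. a \<in> topspace T \<Longrightarrow> le a a"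
    using po unfolding partial_order_on_space_def by blast
  have ant: "\<And>a b. a \<in> topspace T \<Longrightarrow> b \<in> topspace T \<Longrightarrow> le a b \<Longrightarrow> le b a \<Longrightarrow> a = b"
    using po unfolding partial_order_on_space_def by blast
  have trn: "\<And>a b c. a \<in> topspace T \<Longrightarrow> b \<in> topspace T \<Longrightarrow> c \<in> topspace T \<Longrightarrow> le a b \<Longrightarrow> le b c \<Longrightarrow> le a c"
    using po unfolding partial_order_on_space_def by blast
  have xT: "x \<in> topspace T" using x Ssub by blast
  have xK: "x \<in> K" unfolding K_def using x rfl[OF xT] by blast
  have KT: "K \<subseteq> topspace T" using Ssub K_def by auto
  have "\<exists>m \<in> K. \<forall>a \<in> K. (\<lambda>a b. le b a) m a \<longrightarrow> a = m"
  proof (rule predicate_Zorn)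
    show "partial_order_on K (relation_of (\<lambda>a b. le b a) K)"
    proof (rule partial_order_on_relation_ofI)
      fix a assume "a \<in> K" then show "le a a" using rfl KT by blast
    next
      fix a b c assume "a \<in> K" "b \<in> K" "c \<in> K" "le b a" "le c b"
      then show "le c a" using trn[of c b a] KT by blast
    next
      fix a b assume "a \<in> K" "b \<in> K" "le b a" "le a b"
      then show "a = b" using ant[of a b] KT by blast
    qed
  next
    fix C assume C: "C \<in> Chains (relation_of (\<lambda>a b. le b a) K)"
    then have CK: "C \<subseteq> K" and ch: "\<forall>a\<in>C. \<forall>b\<in>C. le a b \<or> le b a"
      unfolding Chains_def relation_of_def by auto
    show "\<exists>u\<in>K. \<forall>a\<in>C. le u a"
    proof (cases "C = {}")
      case True then show ?thesis using xK by auto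
    next
      case False
      then obtain c0 where c0: "c0 \<in> C" by auto
      define U where "U = insert S ((\<lambda>c. down_of T le {c}) ` C)"
      have "\<Inter>U \<noteq> {}"
        using comp unfolding compact_space_fip
      proof (elim allE impE)
        show "(\<forall>A\<in>U. closedin T A) \<and> (\<forall>F. finite F \<and> F \<subseteq> U \<longrightarrow> \<Inter> F \<noteq> {})"
        proof (intro conjI allI impI ballI)
          fix A assume "A \<in> U"
          then have "A = S \<or> (\<exists>c\<in>C. A = down_of T le {c})" unfolding U_def by blast
          then show "closedin T A"
          proof
            assume "A = S" then show ?thesis using S by simp
          next
            assume "\<exists>c\<in>C. A = down_of T le {c}"
            then obtain c where "c \<in> C" "A = down_of T le {c}" by blast
            moreover have "c \<in> topspace T" using \<open>c \<in> C\<close> CK KT by blast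
            ultimately show ?thesis using down_closed[OF P] by simp
          qed
        next
          fix F assume F: "finite F \<and> F \<subseteq> U"
          then obtain C' where C': "C' \<subseteq> C" "finite C'" "F \<subseteq> insert S ((\<lambda>c. down_of T le {c}) ` C')"
          proof -
            have f1: "finite (F - {S})" using F by blast
            have f2: "F - {S} \<subseteq> (\<lambda>c. down_of T le {c}) ` C" using F unfolding U_def by blast
            obtain C' where "C' \<subseteq> C" "finite C'" "F - {S} = (\<lambda>c. down_of T le {c}) ` C'"
              using finite_subset_image[OF f1 f2] by blast
            moreover then have "F \<subseteq> insert S ((\<lambda>c. down_of T le {c}) ` C')" by blast
            ultimately show ?thesis using that by blast
          qed
          show "\<Inter>F \<noteq> {}"
          proof (cases "C' = {}")
            case True
            then have "x \<in> \<Inter>F" using C' x by auto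
            then show ?thesis by auto
          next
            case False
            have tr: "\<forall>a\<in>C'. \<forall>b\<in>C'. \<forall>c\<in>C'. le a b \<and> le b c \<longrightarrow> le a c"
              using trn C' CK KT by (meson subsetD)
            obtain m where m: "m \<in> C'" "\<forall>a\<in>C'. le m a"
              using chain_min[OF C'(2) False _ tr] ch C'(1) by blast
            have mS: "m \<in> S" "m \<in> topspace T" using m(1) C'(1) CK KT unfolding K_def by auto
            have "m \<in> \<Inter>F"
            proof
              fix X assume "X \<in> F"
              then have "X = S \<or> (\<exists>c\<in>C'. X = down_of T le {c})" using C'(3) by blast
              then show "m \<in> X" using mS m(2) unfolding down_of_def by auto
            qed
            then show ?thesis by auto
          qed
        qed
      qed
      then obtain u where u: "u \<in> \<Inter>U" by auto
      have uS: "u \<in> S" using u U_def by auto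
      have ub: "\<forall>a\<in>C. le u a" using u unfolding U_def down_of_def by auto
      have "le u c0" "le c0 x" "u \<in> topspace T" "c0 \<in> topspace T"
        using ub c0 CK KT uS Ssub unfolding K_def by auto
      then have "le u x" using trn[of u c0 x] xT by blast
      then show ?thesis using uS ub K_def by auto
    qed
  qed
  then obtain m where m: "m \<in> K" "\<forall>a\<in>K. le a m \<longrightarrow> a = m" by auto
  have "m \<in> minimals le S"
    unfolding minimals_def
  proof (intro CollectI conjI ballI impI)
    show "m \<in> S" using m K_def by auto
    fix y assume "y \<in> S" "le y m"
    moreover have "le m x" using m K_def by auto
    ultimately have "le y x" using trn[of y m x] Ssub xT m(1) K_def by blast
    then show "y = m" using m \<open>y \<in> S\<close> \<open>le y m\<close> K_def by auto
  qed
  then show ?thesis using m K_def by auto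
qed

lemma min_isolated:
  assumes L: "L_space T le" and K: "L_compact T le" and x: "x \<in> topspace T"
    and mn: "\<forall>y\<in>topspace T. le y x \<longrightarrow> y = x"
  shows "openin T {x}"
proof -
  have P: "priestley_space T le" using L unfolding L_space_def by auto
  have H: "Hausdorff_space T" using P unfolding priestley_space_def stone_space_def by auto
  define W where "W = topspace T - {x}"
  have Wo: "openin T W" unfolding W_def using closedin_Hausdorff_singleton[OF H x]
    by (simp add: openin_diff)
  have Wu: "upset T le W" unfolding upset_def W_def using mn by auto
  have "x \<notin> T closure_of W"
  proof
    assume xc: "x \<in> T closure_of W"
    have "topspace T \<subseteq> T closure_of W"
    proof
      fix z assume "z \<in> topspace T"
      then show "z \<in> T closure_of W"
        using xc closure_of_subset[of W T] unfolding W_def by (cases "z = x") auto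
    qed
    moreover have "x \<in> ker T le (topspace T)" using K x unfolding L_compact_def by auto
    then obtain V where "V \<in> ClopUp T le" "way_below T le V (topspace T)" "x \<in> V"
      unfolding ker_def by auto
    ultimately have "V \<subseteq> W" using Wo Wu unfolding way_below_def by auto
    then show False using \<open>x \<in> V\<close> W_def by auto
  qed
  moreover have "openin T (topspace T - T closure_of W)" by (simp add: openin_diff)
  moreover have "topspace T - T closure_of W = {x}"
    using \<open>x \<notin> T closure_of W\<close> x closure_of_subset[of W T] unfolding W_def by auto
  ultimately show ?thesis by simp
qed

lemma bi_scott:
  assumes L: "L_space T le" and K: "L_compact T le" and B: "B \<in> ClopBi T le"
  shows "B \<in> ClopSUp T le"
proof -
  have P: "priestley_space T le" using L unfolding L_space_def by auto
  have H: "Hausdorff_space T" using P unfolding priestley_space_def stone_space_def by auto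
  have po: "partial_order_on_space T le" using P unfolding priestley_space_def by auto
  have BT: "B \<subseteq> topspace T" using B unfolding ClopBi_def upset_def by auto
  have "minimals le B \<subseteq> spatial_part T le"
  proof
    fix x assume "x \<in> minimals le B"
    then have xB: "x \<in> B" and mn: "\<forall>y\<in>B. le y x \<longrightarrow> y = x" unfolding minimals_def by auto
    have xT: "x \<in> topspace T" using xB BT by auto
    have mn': "\<forall>y\<in>topspace T. le y x \<longrightarrow> y = x"
      using mn xB B unfolding ClopBi_def downset_def by auto
    have "le x x" using po xT unfolding partial_order_on_space_def by blast
    then have "down_of T le {x} = {x}"
      using mn' xT unfolding down_of_def by auto
    moreover have "clopen_in T {x}"
      unfolding clopen_in_def using min_isolated[OF L K xT mn'] closedin_Hausdorff_singleton[OF H xT] by auto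
    ultimately show "x \<in> spatial_part T le" unfolding spatial_part_def using xT by auto
  qed
  then show ?thesis using B unfolding ClopBi_def ClopSUp_def scott_upset_def clopen_in_def by auto
qed

lemma cen_open_upset:
  shows "openin T (cen T le U) \<and> upset T le (cen T le U)"
  unfolding cen_def ClopBi_def clopen_in_def upset_def by auto

lemma ker_sub_cen:
  assumes S: "stone_L_space T le" and U: "U \<in> ClopUp T le"
  shows "ker T le U \<subseteq> cen T le U"
proof
  fix x assume "x \<in> ker T le U"
  then obtain A where "A \<in> ClopUp T le" "way_below T le A U" "x \<in> A" unfolding ker_def by auto
  moreover have "U \<subseteq> T closure_of (cen T le U)" using S U unfolding stone_L_space_def by auto
  ultimately show "x \<in> cen T le U" using cen_open_upset unfolding way_below_def by blast
qed

lemma cen_sub_ker: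
  assumes S: "stone_L_space T le"
  shows "cen T le U \<subseteq> ker T le U"
proof
  fix x assume "x \<in> cen T le U"
  then obtain B where B: "B \<in> ClopBi T le" "B \<subseteq> U" "x \<in> B" unfolding cen_def by auto
  have BT: "B \<subseteq> topspace T" using B unfolding ClopBi_def upset_def by auto
  have "way_below T le B U"
    unfolding way_below_def
  proof (intro allI impI)
    fix W assume W: "openin T W \<and> upset T le W" and UW: "U \<subseteq> T closure_of W"
    define W' where "W' = W \<union> (topspace T - B)"
    have W'o: "openin T W'" unfolding W'_def using W B
      by (simp add: ClopBi_def clopen_in_def closedin_def openin_Un openin_diff)
    have W'u: "upset T le W'" unfolding W'_def using W B
      unfolding upset_def ClopBi_def downset_def by blast
    have "T closure_of W \<subseteq> T closure_of W'" unfolding W'_def by (simp add: closure_of_mono)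
    moreover have "topspace T - B \<subseteq> T closure_of W'"
    proof -
      have "W' \<subseteq> T closure_of W'" using W'o by (simp add: closure_of_subset openin_subset)
      then show ?thesis unfolding W'_def by blast
    qed
    ultimately have all: "topspace T \<subseteq> T closure_of W'" using UW B(2) BT by blast
    have "topspace T \<subseteq> W'"
    proof
      fix z assume "z \<in> topspace T"
      then have "z \<in> ker T le (topspace T)" using S unfolding stone_L_space_def L_compact_def by auto
      then obtain V where "V \<in> ClopUp T le" "way_below T le V (topspace T)" "z \<in> V"
        unfolding ker_def by auto
      then show "z \<in> W'" using all W'o W'u unfolding way_below_def by blast
    qed
    then show "B \<subseteq> W" using BT unfolding W'_def by auto
  qed
  moreover have "B \<in> ClopUp T le" using B unfolding ClopBi_def ClopUp_def by auto
  ultimately show "x \<in> ker T le U" unfolding ker_def using B by auto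
qed

lemma ker_eq_cen:
  assumes "stone_L_space T le" "U \<in> ClopUp T le"
  shows "ker T le U = cen T le U"
  using ker_sub_cen[OF assms] cen_sub_ker[OF assms(1)] by auto

lemma cen_Int: "cen T le (U \<inter> V) = cen T le U \<inter> cen T le V"
proof
  show "cen T le (U \<inter> V) \<subseteq> cen T le U \<inter> cen T le V" unfolding cen_def by auto
next
  show "cen T le U \<inter> cen T le V \<subseteq> cen T le (U \<inter> V)"
  proof
    fix x assume "x \<in> cen T le U \<inter> cen T le V"
    then obtain B1 B2 where B: "B1 \<in> ClopBi T le" "B1 \<subseteq> U" "x \<in> B1"
      "B2 \<in> ClopBi T le" "B2 \<subseteq> V" "x \<in> B2" unfolding cen_def by auto
    have b1: "openin T B1" "closedin T B1" "upset T le B1" "downset T le B1"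
      using B(1) unfolding ClopBi_def clopen_in_def by auto
    have b2: "openin T B2" "closedin T B2" "upset T le B2" "downset T le B2"
      using B(4) unfolding ClopBi_def clopen_in_def by auto
    have "upset T le (B1 \<inter> B2)" using b1(3) b2(3) unfolding upset_def by blast
    moreover have "downset T le (B1 \<inter> B2)" using b1(4) b2(4) unfolding downset_def by blast
    moreover have "openin T (B1 \<inter> B2)" using b1(1) b2(1) by (rule openin_Int)
    moreover have "closedin T (B1 \<inter> B2)" using b1(2) b2(2) by (rule closedin_Int)
    ultimately have "B1 \<inter> B2 \<in> ClopBi T le" unfolding ClopBi_def clopen_in_def by blast
    then show "x \<in> cen T le (U \<inter> V)" using B unfolding cen_def by blast
  qed
qed

lemma scott_sub_cen:
  assumes S: "stone_L_space T le" and A: "A \<in> ClopSUp T le"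
  shows "A \<subseteq> cen T le A"
proof
  fix x assume xA: "x \<in> A"
  have L: "L_space T le" using S unfolding stone_L_space_def by auto
  have P: "priestley_space T le" using L unfolding L_space_def by auto
  have po: "partial_order_on_space T le" using P unfolding priestley_space_def by auto
  have AU: "A \<in> ClopUp T le" using A unfolding ClopSUp_def ClopUp_def scott_upset_def by auto
  have AT: "A \<subseteq> topspace T" using AU unfolding ClopUp_def upset_def by auto
  obtain m where m: "m \<in> minimals le A" "le m x"
    using min_exists[OF P _ xA] A unfolding ClopSUp_def clopen_in_def by auto
  have mA: "m \<in> A" using m unfolding minimals_def by auto
  have "m \<in> spatial_part T le" using m A unfolding ClopSUp_def scott_upset_def by auto
  then have dm: "openin T (down_of T le {m})" unfolding spatial_part_def clopen_in_def by auto
  have mT: "m \<in> topspace T" using mA AT by auto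
  have "le m m" using po mT unfolding partial_order_on_space_def by blast
  then have mdm: "m \<in> down_of T le {m}" using mT unfolding down_of_def by auto
  have "m \<in> T closure_of (cen T le A)" using S AU mA unfolding stone_L_space_def by auto
  then obtain w where w: "w \<in> cen T le A" "w \<in> down_of T le {m}"
    using dm mdm unfolding in_closure_of by blast
  have "m \<in> cen T le A" using w cen_open_upset[of T le A] mT unfolding upset_def down_of_def by auto
  then show "x \<in> cen T le A" using cen_open_upset[of T le A] m(2) xA AT unfolding upset_def by auto
qed

theorem theorem5p14:
  fixes T :: "'a topology" and le :: "'a \<Rightarrow> 'a \<Rightarrow> bool"
    and T1 :: "'a topology" and le1 :: "'a \<Rightarrow> 'a \<Rightarrow> bool"
    and T2 :: "'b topology" and le2 :: "'b \<Rightarrow> 'b \<Rightarrow> bool"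
    and f :: "'a \<Rightarrow> 'b"
  shows "(stone_L_space T le \<longrightarrow> coherent_L_space T le) \<and>
         (stone_L_space T1 le1 \<and> stone_L_space T2 le2 \<and> L_morphism T1 le1 T2 le2 f
            \<longrightarrow> coherent_L_morphism T1 le1 T2 le2 f)"
proof (intro conjI impI)
  assume S: "stone_L_space T le"
  have L: "L_space T le" and K: "L_compact T le" using S unfolding stone_L_space_def by auto
  have cc: "cen T le U \<subseteq> core T le U" for U
    unfolding cen_def core_def using bi_scott[OF L K] by blast
  have d: "\<forall>U \<in> ClopUp T le. U \<subseteq> T closure_of (core T le U)"
  proof
    fix U assume "U \<in> ClopUp T le"
    then have "U \<subseteq> T closure_of (cen T le U)" using S unfolding stone_L_space_def by auto
    then show "U \<subseteq> T closure_of (core T le U)" using closure_of_mono[OF cc] by blast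
  qed
  have k: "\<forall>U \<in> ClopUp T le. \<forall>V \<in> ClopUp T le. ker T le (U \<inter> V) = ker T le U \<inter> ker T le V"
  proof (intro ballI)
    fix U V assume U: "U \<in> ClopUp T le" and V: "V \<in> ClopUp T le"
    have u: "openin T U" "closedin T U" "upset T le U" using U unfolding ClopUp_def clopen_in_def by auto
    have v: "openin T V" "closedin T V" "upset T le V" using V unfolding ClopUp_def clopen_in_def by auto
    have "upset T le (U \<inter> V)" using u(3) v(3) unfolding upset_def by blast
    moreover have "openin T (U \<inter> V)" using u(1) v(1) by (rule openin_Int)
    moreover have "closedin T (U \<inter> V)" using u(2) v(2) by (rule closedin_Int)
    ultimately have "U \<inter> V \<in> ClopUp T le" unfolding ClopUp_def clopen_in_def by blast
    then have "ker T le (U \<inter> V) = cen T le (U \<inter> V)" by (rule ker_eq_cen[OF S])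
    moreover have "ker T le U = cen T le U" using U by (rule ker_eq_cen[OF S])
    moreover have "ker T le V = cen T le V" using V by (rule ker_eq_cen[OF S])
    ultimately show "ker T le (U \<inter> V) = ker T le U \<inter> ker T le V" by (simp add: cen_Int)
  qed
  show "coherent_L_space T le" unfolding coherent_L_space_def using L K d k by auto
next
  assume A: "stone_L_space T1 le1 \<and> stone_L_space T2 le2 \<and> L_morphism T1 le1 T2 le2 f"
  then have S1: "stone_L_space T1 le1" and S2: "stone_L_space T2 le2"
    and M: "L_morphism T1 le1 T2 le2 f" by auto
  have L1: "L_space T1 le1" and K1: "L_compact T1 le1" using S1 unfolding stone_L_space_def by auto
  have cont: "continuous_map T1 T2 f" and mono: "\<forall>x\<in>topspace T1. \<forall>y\<in>topspace T1. le1 x y \<longrightarrow> le2 (f x) (f y)"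
    using M unfolding L_morphism_def by blast+
  have cm: "\<forall>U \<in> ClopUp T2 le2.
        {x \<in> topspace T1. f x \<in> core T2 le2 U} \<subseteq> core T1 le1 {x \<in> topspace T1. f x \<in> U}"
  proof (intro ballI subsetI)
    fix U x assume U: "U \<in> ClopUp T2 le2" and x: "x \<in> {x \<in> topspace T1. f x \<in> core T2 le2 U}"
    have "f x \<in> core T2 le2 U" using x by blast
    then obtain A where A: "A \<in> ClopSUp T2 le2" "A \<subseteq> U" "f x \<in> A" unfolding core_def by blast
    then have "f x \<in> cen T2 le2 A" using scott_sub_cen[OF S2] by blast
    then obtain B where B: "B \<in> ClopBi T2 le2" "B \<subseteq> A" "f x \<in> B" unfolding cen_def by auto
    define B' where "B' = {x \<in> topspace T1. f x \<in> B}"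
    have "B' \<in> ClopBi T1 le1"
      unfolding ClopBi_def clopen_in_def
    proof (intro CollectI conjI)
      have Bc: "openin T2 B" "closedin T2 B" using B(1) unfolding ClopBi_def clopen_in_def by blast+
      show "openin T1 B'" unfolding B'_def by (rule openin_continuous_map_preimage[OF cont Bc(1)])
      show "closedin T1 B'" unfolding B'_def by (rule closedin_continuous_map_preimage[OF cont Bc(2)])
      have ft: "\<forall>y\<in>topspace T1. f y \<in> topspace T2"
        using continuous_map_image_subset_topspace[OF cont] by blast
      have Bud: "upset T2 le2 B" "downset T2 le2 B" using B(1) unfolding ClopBi_def by blast+
      have Bu: "\<forall>a\<in>B. \<forall>b\<in>topspace T2. le2 a b \<longrightarrow> b \<in> B"
        using Bud(1) unfolding upset_def by blast
      have Bd: "\<forall>a\<in>B. \<forall>b\<in>topspace T2. le2 b a \<longrightarrow> b \<in> B"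
        using Bud(2) unfolding downset_def by blast
      show "upset T1 le1 B'" unfolding upset_def B'_def
      proof (intro conjI ballI impI)
        fix a b assume a: "a \<in> {x \<in> topspace T1. f x \<in> B}" and b: "b \<in> topspace T1" and ab: "le1 a b"
        have "le2 (f a) (f b)" using mono a b ab by auto
        then have "f b \<in> B" using Bu a b ft by blast
        then show "b \<in> {x \<in> topspace T1. f x \<in> B}" using b by auto
      next
        show "{x \<in> topspace T1. f x \<in> B} \<subseteq> topspace T1" by blast
      qed
      show "downset T1 le1 B'" unfolding downset_def B'_def
      proof (intro conjI ballI impI)
        fix a b assume a: "a \<in> {x \<in> topspace T1. f x \<in> B}" and b: "b \<in> topspace T1" and ab: "le1 b a"
        have "le2 (f b) (f a)" using mono a b ab by auto
        then have "f b \<in> B" using Bd a b ft by blast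
        then show "b \<in> {x \<in> topspace T1. f x \<in> B}" using b by auto
      next
        show "{x \<in> topspace T1. f x \<in> B} \<subseteq> topspace T1" by blast
      qed
    qed
    then have "B' \<in> ClopSUp T1 le1" using bi_scott[OF L1 K1] by blast
    moreover have "B' \<subseteq> {x \<in> topspace T1. f x \<in> U}" using B(2) A(2) unfolding B'_def by blast
    moreover have "x \<in> B'" using x B(3) unfolding B'_def by blast
    ultimately show "x \<in> core T1 le1 {x \<in> topspace T1. f x \<in> U}" unfolding core_def by blast
  qed
  show "coherent_L_morphism T1 le1 T2 le2 f" unfolding coherent_L_morphism_def using M cm by blast
qed

end
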